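(* Let $\lambda>0$, let $x^{(1)},\dots,x^{(N)}\in\mathbb{R}^d$ and $\hat\mu=\frac1N\sum_{i=1}^N\delta_{x^{(i)}}$. Define $D_{XX}\in\mathbb{R}^{(Nd)\times N}$ by $[D_{XX}]_{(i,l),j}=\partial_{1,l}k(x^{(i)},x^{(j)})$, $H_{XX}\in\mathbb{R}^{(Nd)\times(Nd)}$ by $[H_{XX}]_{(i,l),(j,m)}=\partial_{1,l}\partial_{2,m}k(x^{(i)},x^{(j)})$, and for $z\in\mathbb{R}^d$ the vectors $\mathbb K_X(z)=[k(x^{(1)},z),\dots,k(x^{(N)},z)]^\top\in\mathbb{R}^N$ and $\mathbb D_X(z)\in\mathbb{R}^{Nd}$ with entries $[\mathbb D_X(z)]_{(i,l)}=\partial_{1,l}k(x^{(i)},z)$. Let $\mathbf 1_N\in\mathbb{R}^N$ be the all-ones vector. Then for all $z\in\mathbb{R}^d$, $$f_{\hat\mu,\pi}(z)=\frac{\mathbf 1_N^\top\mathbb K_X(z)}{N\lambda}-\frac{\mathbb E_{Y\sim\pi}[k(Y,z)]}{\lambda}-\mathbb D_X(z)^\top(H_{XX}+N\lambda\mathrm{Id})^{-1}\Big(\frac{D_{XX}\mathbf 1_N}{N\lambda}-\frac{\mathbb E_{Y\sim\pi}[\mathbb D_X(Y)]}{\lambda}\Big).$$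
   Context: $k$ is a symmetric positive definite kernel on $\mathbb{R}^d$, sufficiently continuously differentiable, with RKHS $\mathcal H$; $\partial_{1,l},\partial_{2,m}$ are partial derivatives in the first/second argument. $\pi$ is a probability measure for which the mean embedding $m_\pi=\int k(y,\cdot)\mathrm{d}\pi(y)\in\mathcal H$ is well defined; $m_{\hat\mu}=\frac1N\sum_ik(x^{(i)},\cdot)$. $S_{\hat\mu}:\mathcal H\to\mathcal H$ is defined by $\langle f,S_{\hat\mu}g\rangle_{\mathcal H}=\frac1N\sum_{i=1}^N\nabla f(x^{(i)})^\top\nabla g(x^{(i)})$, and $f_{\hat\mu,\pi}:=(S_{\hat\mu}+\lambda\mathrm{Id})^{-1}(m_{\hat\mu}-m_\pi)$. Index pairs $(i,l)$, $i\le N$, $l\le d$, are identified with indices $1,\dots,Nd$ in a fixed order. *)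

theory Defs
  imports "HOL-Analysis.Analysis" "HOL-Probability.Probability"
begin

definition dir_deriv :: "('a::real_normed_vector \<Rightarrow> real) \<Rightarrow> 'a \<Rightarrow> 'a \<Rightarrow> real" where
  "dir_deriv g v x = deriv (\<lambda>t. g (x + t *\<^sub>R v)) 0"

definition C2_fun :: "('a::euclidean_space \<Rightarrow> real) \<Rightarrow> bool" where
  "C2_fun g \<longleftrightarrow>
     continuous_on UNIV g \<and>
     (\<forall>v\<in>Basis. \<forall>x. (\<lambda>t. g (x + t *\<^sub>R v)) field_differentiable (at 0)) \<and>
     (\<forall>v\<in>Basis. continuous_on UNIV (dir_deriv g v)) \<and>
     (\<forall>v\<in>Basis. \<forall>w\<in>Basis. \<forall>x.
        (\<lambda>t. dir_deriv g v (x + t *\<^sub>R w)) field_differentiable (at 0)) \<and>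
     (\<forall>v\<in>Basis. \<forall>w\<in>Basis. continuous_on UNIV (dir_deriv (dir_deriv g v) w))"

definition d1k :: "('d::finite) \<Rightarrow> (real^'d \<Rightarrow> real^'d \<Rightarrow> real) \<Rightarrow> real^'d \<Rightarrow> real^'d \<Rightarrow> real" where
  "d1k l k x y = dir_deriv (\<lambda>u. k u y) (axis l 1) x"

definition d12k :: "('d::finite) \<Rightarrow> 'd \<Rightarrow> (real^'d \<Rightarrow> real^'d \<Rightarrow> real) \<Rightarrow> real^'d \<Rightarrow> real^'d \<Rightarrow> real" where
  "d12k l m k x y = dir_deriv (\<lambda>u. dir_deriv (\<lambda>v. k u v) (axis m 1) y) (axis l 1) x"

text \<open>RKHS of k, represented through its canonical feature map \<phi> x = k(x,\<cdot>) in a Hilbert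
  space 'h: the element f of 'h is the function z \<mapsto> \<langle>f, \<phi> z\<rangle> (reproducing property),
  \<langle>\<phi> x, \<phi> y\<rangle> = k(x,y), and the span of the k(x,\<cdot>) is dense.\<close>
definition is_rkhs_feature ::
  "(real^'d::finite \<Rightarrow> real^'d \<Rightarrow> real) \<Rightarrow> (real^'d \<Rightarrow> 'h::{real_inner,complete_space}) \<Rightarrow> bool" where
  "is_rkhs_feature k \<phi> \<longleftrightarrow> (\<forall>x y. inner (\<phi> x) (\<phi> y) = k x y) \<and> closure (span (range \<phi>)) = UNIV"

definition rk_eval :: "(real^'d::finite \<Rightarrow> 'h::real_inner) \<Rightarrow> 'h \<Rightarrow> real^'d \<Rightarrow> real" where
  "rk_eval \<phi> f z = inner f (\<phi> z)"

definition rk_grad :: "(real^'d::finite \<Rightarrow> 'h::real_inner) \<Rightarrow> 'h \<Rightarrow> real^'d \<Rightarrow> 'd \<Rightarrow> real" where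
  "rk_grad \<phi> f x l = dir_deriv (rk_eval \<phi> f) (axis l 1) x"

text \<open>Mean embedding m_\<pi> = \<integral> k(y,\<cdot>) d\<pi>(y), characterised weakly by
  \<langle>f, m_\<pi>\<rangle> = \<integral> f(y) d\<pi>(y) for all f in H.\<close>
definition mean_emb_wd :: "(real^'d::finite \<Rightarrow> 'h::real_inner) \<Rightarrow> (real^'d) measure \<Rightarrow> 'h \<Rightarrow> bool" where
  "mean_emb_wd \<phi> \<pi> m \<longleftrightarrow>
     (\<forall>f. integrable \<pi> (\<lambda>y. inner f (\<phi> y)) \<and> inner f m = (\<integral>y. inner f (\<phi> y) \<partial>\<pi>))"

definition mean_emb :: "(real^'d::finite \<Rightarrow> 'h::real_inner) \<Rightarrow> (real^'d) measure \<Rightarrow> 'h" where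
  "mean_emb \<phi> \<pi> = (THE m. mean_emb_wd \<phi> \<pi> m)"

definition emp_mean_emb :: "(real^'d::finite \<Rightarrow> 'h::real_inner) \<Rightarrow> ('n::finite \<Rightarrow> real^'d) \<Rightarrow> 'h" where
  "emp_mean_emb \<phi> X = (1 / real CARD('n)) *\<^sub>R (\<Sum>i\<in>UNIV. \<phi> (X i))"

definition S_op :: "(real^'d::finite \<Rightarrow> 'h::real_inner) \<Rightarrow> ('n::finite \<Rightarrow> real^'d) \<Rightarrow> 'h \<Rightarrow> 'h" where
  "S_op \<phi> X g = (THE h. \<forall>f. inner f h =
      (1 / real CARD('n)) * (\<Sum>i\<in>UNIV. \<Sum>l\<in>UNIV. rk_grad \<phi> f (X i) l * rk_grad \<phi> g (X i) l))"

definition f_muhat_pi :: "(real^'d::finite \<Rightarrow> 'h::real_inner) \<Rightarrow> ('n::finite \<Rightarrow> real^'d) \<Rightarrow> (real^'d) measure \<Rightarrow> real \<Rightarrow> 'h" where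
  "f_muhat_pi \<phi> X \<pi> lam = (THE f. S_op \<phi> X f + lam *\<^sub>R f = emp_mean_emb \<phi> X - mean_emb \<phi> \<pi>)"

end

theory Submission
  imports Defs
begin


lemma mvt0:
  fixes f :: "real \<Rightarrow> real"
  assumes "\<And>y. DERIV f y :> f' y"
  shows "\<exists>c. \<bar>c\<bar> \<le> \<bar>t\<bar> \<and> f t - f 0 = t * f' c"
proof (cases "t = 0")
  case True then show ?thesis by (intro exI[of _ 0]) auto
next
  case False
  show ?thesis
  proof (cases "t > 0")
    case True
    from MVT2[OF True, of f f'] assms obtain z where "0 < z" "z < t" "f t - f 0 = (t - 0) * f' z" by auto
    then show ?thesis by (intro exI[of _ z]) auto
  next
    case False
    with \<open>t \<noteq> 0\<close> have "t < 0" by auto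
    from MVT2[OF this, of f f'] assms obtain z where "t < z" "z < 0" "f 0 - f t = (0 - t) * f' z" by auto
    then show ?thesis by (intro exI[of _ z]) (auto simp: algebra_simps)
  qed
qed

lemma deriv_shift_dir:
  fixes g :: "'a::real_normed_vector \<Rightarrow> real"
  assumes "\<forall>x. (\<lambda>t. g (x + t *\<^sub>R v)) field_differentiable (at 0)"
  shows "DERIV (\<lambda>a. g (q + a *\<^sub>R v)) a0 :> dir_deriv g v (q + a0 *\<^sub>R v)"
proof -
  let ?y = "q + a0 *\<^sub>R v"
  have "DERIV (\<lambda>t. g (?y + t *\<^sub>R v)) 0 :> dir_deriv g v ?y"
    using assms unfolding dir_deriv_def by (simp add: DERIV_deriv_iff_field_differentiable)
  then have "DERIV (\<lambda>t. g (?y + t *\<^sub>R v)) (a0 + - a0) :> dir_deriv g v ?y" by simp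
  then have "DERIV (\<lambda>t. g (?y + (t + - a0) *\<^sub>R v)) a0 :> dir_deriv g v ?y"
    by (subst (asm) DERIV_shift) simp
  moreover have "(\<lambda>t. g (?y + (t + - a0) *\<^sub>R v)) = (\<lambda>a. g (q + a *\<^sub>R v))"
    by (rule ext) (simp add: algebra_simps)
  ultimately show ?thesis by simp
qed

lemma basis_pairs:
  fixes e :: "'a::euclidean_space"
  assumes "e \<in> Basis"
  shows "(e, 0::'a) \<in> Basis" "(0::'a, e) \<in> Basis"
  using assms by (auto simp: Basis_prod_def)

lemma mixed_mvt:
  fixes G :: "'a::euclidean_space \<times> 'a \<Rightarrow> real"
  assumes C2: "C2_fun G" and e: "e \<in> Basis"
  shows "\<exists>a b. \<bar>a\<bar> \<le> \<bar>t\<bar> \<and> \<bar>b\<bar> \<le> \<bar>s\<bar> \<and>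
     G (x + t *\<^sub>R e, u + s *\<^sub>R e) - G (x + t *\<^sub>R e, u) - G (x, u + s *\<^sub>R e) + G (x, u)
       = t * s * dir_deriv (dir_deriv G (e,0)) (0,e) (x + a *\<^sub>R e, u + b *\<^sub>R e)"
proof -
  have v1: "(e,0::'a) \<in> Basis" and v2: "(0::'a,e) \<in> Basis" using basis_pairs[OF e] by auto
  have d1: "\<forall>p. (\<lambda>t. G (p + t *\<^sub>R (e,0))) field_differentiable (at 0)"
    using C2 v1 unfolding C2_fun_def by blast
  have d2: "\<forall>p. (\<lambda>t. dir_deriv G (e,0) (p + t *\<^sub>R (0,e))) field_differentiable (at 0)"
    using C2 v1 v2 unfolding C2_fun_def by blast
  define h where "h a = G ((x, u + s *\<^sub>R e) + a *\<^sub>R (e,0)) - G ((x, u) + a *\<^sub>R (e,0))" for a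
  have "DERIV h a :> dir_deriv G (e,0) ((x, u + s *\<^sub>R e) + a *\<^sub>R (e,0)) - dir_deriv G (e,0) ((x, u) + a *\<^sub>R (e,0))" for a
    unfolding h_def by (intro derivative_intros deriv_shift_dir d1)
  from mvt0[OF this, of t] obtain a where a: "\<bar>a\<bar> \<le> \<bar>t\<bar>"
    "h t - h 0 = t * (dir_deriv G (e,0) ((x, u + s *\<^sub>R e) + a *\<^sub>R (e,0)) - dir_deriv G (e,0) ((x, u) + a *\<^sub>R (e,0)))"
    by blast
  define j where "j b = dir_deriv G (e,0) ((x + a *\<^sub>R e, u) + b *\<^sub>R (0,e))" for b
  have "DERIV j b :> dir_deriv (dir_deriv G (e,0)) (0,e) ((x + a *\<^sub>R e, u) + b *\<^sub>R (0,e))" for b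
    unfolding j_def by (intro deriv_shift_dir d2)
  from mvt0[OF this, of s] obtain b where b: "\<bar>b\<bar> \<le> \<bar>s\<bar>"
    "j s - j 0 = s * dir_deriv (dir_deriv G (e,0)) (0,e) ((x + a *\<^sub>R e, u) + b *\<^sub>R (0,e))"
    by blast
  have "G (x + t *\<^sub>R e, u + s *\<^sub>R e) - G (x + t *\<^sub>R e, u) - G (x, u + s *\<^sub>R e) + G (x, u) = h t - h 0"
    by (simp add: h_def)
  also have "\<dots> = t * (j s - j 0)" using a(2) by (simp add: j_def)
  also have "\<dots> = t * s * dir_deriv (dir_deriv G (e,0)) (0,e) (x + a *\<^sub>R e, u + b *\<^sub>R e)"
    using b(2) by simp
  finally show ?thesis using a(1) b(1) by blast
qed

lemma three_abs: "\<bar>a\<bar> < q/4 \<Longrightarrow> \<bar>b\<bar> < q/4 \<Longrightarrow> \<bar>c\<bar> < q/4 \<Longrightarrow> a - 2 * b + c < (q::real)"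
  by linarith

lemma norm_pair_le: "norm (u, v) \<le> norm u + norm (v::'b::real_normed_vector)"
proof -
  have "norm (u, v) = norm ((u, 0::'b) + (0, v))" by simp
  also have "\<dots> \<le> norm (u, 0::'b) + norm (0::'a, v)" by (rule norm_triangle_ineq)
  finally show ?thesis by (simp add: norm_Pair)
qed

lemma feature_deriv:
  fixes \<phi> :: "'a::euclidean_space \<Rightarrow> 'h::{real_inner,complete_space}"
  assumes ik: "\<And>x y. inner (\<phi> x) (\<phi> y) = k x y"
    and C2: "C2_fun (\<lambda>p. k (fst p) (snd p))" and e: "e \<in> Basis"
  shows "\<exists>\<psi>. ((\<lambda>t. (1/t) *\<^sub>R (\<phi> (x + t *\<^sub>R e) - \<phi> x)) \<longlongrightarrow> \<psi>) (at 0)"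
proof -
  define G where "G = (\<lambda>p. k (fst p) (snd p))"
  define D2 where "D2 = dir_deriv (dir_deriv G (e,0)) (0,e)"
  define L where "L = D2 (x, x)"
  define \<Delta> where "\<Delta> t = (1/t) *\<^sub>R (\<phi> (x + t *\<^sub>R e) - \<phi> x)" for t
  have Q: "inner (\<Delta> t) (\<Delta> s) = (G (x + t *\<^sub>R e, x + s *\<^sub>R e) - G (x + t *\<^sub>R e, x) - G (x, x + s *\<^sub>R e) + G (x, x)) / (t * s)"
    if "t \<noteq> 0" "s \<noteq> 0" for t s
    unfolding \<Delta>_def G_def using that by (simp add: inner_diff_left inner_diff_right ik divide_simps)
  have v1: "(e,0::'a) \<in> Basis" and v2: "(0::'a,e) \<in> Basis" using basis_pairs[OF e] by auto
  have "continuous_on UNIV D2" using C2 v1 v2 unfolding C2_fun_def D2_def G_def by blast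
  then have cont: "\<forall>\<epsilon>>0. \<exists>\<delta>>0. \<forall>p. dist p (x,x) < \<delta> \<longrightarrow> dist (D2 p) L < \<epsilon>"
    unfolding continuous_on_iff L_def by blast
  have contab: "\<exists>\<delta>>0. \<forall>a b. \<bar>a\<bar> < \<delta> \<longrightarrow> \<bar>b\<bar> < \<delta> \<longrightarrow> \<bar>D2 (x + a *\<^sub>R e, x + b *\<^sub>R e) - L\<bar> < \<epsilon>"
    if "\<epsilon> > 0" for \<epsilon>
  proof -
    obtain \<delta> where d: "\<delta> > 0" "\<forall>p. dist p (x,x) < \<delta> \<longrightarrow> dist (D2 p) L < \<epsilon>" using cont \<open>\<epsilon> > 0\<close> by blast
    have ne: "norm e = 1" using e by simp
    show ?thesis
    proof (intro exI[of _ "\<delta>/2"] conjI allI impI)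
      fix a b :: real assume ab: "\<bar>a\<bar> < \<delta>/2" "\<bar>b\<bar> < \<delta>/2"
      have "dist (x + a *\<^sub>R e, x + b *\<^sub>R e) (x, x) = norm (a *\<^sub>R e, b *\<^sub>R e)"
        by (simp add: dist_norm)
      also have "\<dots> \<le> norm (a *\<^sub>R e) + norm (b *\<^sub>R e)" by (rule norm_pair_le)
      also have "\<dots> < \<delta>" using ab ne by simp
      finally show "\<bar>D2 (x + a *\<^sub>R e, x + b *\<^sub>R e) - L\<bar> < \<epsilon>" using d(2) by (simp add: dist_real_def)
    qed (use d in auto)
  qed
  have Qb: "\<exists>\<delta>>0. \<forall>t s. t \<noteq> 0 \<longrightarrow> s \<noteq> 0 \<longrightarrow> \<bar>t\<bar> < \<delta> \<longrightarrow> \<bar>s\<bar> < \<delta> \<longrightarrow> \<bar>inner (\<Delta> t) (\<Delta> s) - L\<bar> < \<epsilon>"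
    if eps: "\<epsilon> > 0" for \<epsilon>
  proof -
    obtain \<delta> where d: "\<delta> > 0" "\<forall>a b. \<bar>a\<bar> < \<delta> \<longrightarrow> \<bar>b\<bar> < \<delta> \<longrightarrow> \<bar>D2 (x + a *\<^sub>R e, x + b *\<^sub>R e) - L\<bar> < \<epsilon>"
      using contab[OF eps] by blast
    show ?thesis
    proof (intro exI[of _ \<delta>] conjI allI impI)
      fix t s :: real assume ts: "t \<noteq> 0" "s \<noteq> 0" "\<bar>t\<bar> < \<delta>" "\<bar>s\<bar> < \<delta>"
      obtain a b where ab: "\<bar>a\<bar> \<le> \<bar>t\<bar>" "\<bar>b\<bar> \<le> \<bar>s\<bar>"
        "G (x + t *\<^sub>R e, x + s *\<^sub>R e) - G (x + t *\<^sub>R e, x) - G (x, x + s *\<^sub>R e) + G (x, x)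
           = t * s * D2 (x + a *\<^sub>R e, x + b *\<^sub>R e)"
        using mixed_mvt[of G e t s x x] C2 e unfolding G_def D2_def by blast
      have "inner (\<Delta> t) (\<Delta> s) = D2 (x + a *\<^sub>R e, x + b *\<^sub>R e)"
        unfolding Q[OF ts(1,2)] ab(3) using ts by simp
      then show "\<bar>inner (\<Delta> t) (\<Delta> s) - L\<bar> < \<epsilon>" using d(2) ab ts by auto
    qed (use d in auto)
  qed
  have "cauchy_filter (filtermap \<Delta> (at 0))"
    unfolding cauchy_filter_metric_filtermap
  proof (intro allI impI)
    fix r :: real assume r: "r > 0"
    obtain \<delta> where d: "\<delta> > 0" "\<forall>t s. t \<noteq> 0 \<longrightarrow> s \<noteq> 0 \<longrightarrow> \<bar>t\<bar> < \<delta> \<longrightarrow> \<bar>s\<bar> < \<delta> \<longrightarrow> \<bar>inner (\<Delta> t) (\<Delta> s) - L\<bar> < r^2/4"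
      using Qb[of "r^2/4"] r by auto
    have ev: "eventually (\<lambda>t. t \<noteq> 0 \<and> \<bar>t\<bar> < \<delta>) (at (0::real))"
      unfolding eventually_at using d(1) by (auto simp: dist_real_def)
    have "dist (\<Delta> t) (\<Delta> s) < r" if "t \<noteq> 0 \<and> \<bar>t\<bar> < \<delta>" "s \<noteq> 0 \<and> \<bar>s\<bar> < \<delta>" for t s
    proof -
      have "(dist (\<Delta> t) (\<Delta> s))^2 = (inner (\<Delta> t) (\<Delta> t) - L) - 2 * (inner (\<Delta> t) (\<Delta> s) - L) + (inner (\<Delta> s) (\<Delta> s) - L)"
        by (simp add: dist_norm power2_norm_eq_inner inner_diff_left inner_diff_right inner_commute)
      also have "\<dots> < r^2"
      proof -
        have "\<bar>inner (\<Delta> t) (\<Delta> t) - L\<bar> < r^2/4" "\<bar>inner (\<Delta> t) (\<Delta> s) - L\<bar> < r^2/4"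
          "\<bar>inner (\<Delta> s) (\<Delta> s) - L\<bar> < r^2/4" using d(2) that by auto
        then show ?thesis by (rule three_abs)
      qed
      finally show ?thesis by (rule power2_less_imp_less[OF _ less_imp_le[OF r]])
    qed
    then show "\<exists>P. eventually P (at 0) \<and> (\<forall>t s. P t \<and> P s \<longrightarrow> dist (\<Delta> t) (\<Delta> s) < r)"
      using ev by blast
  qed
  moreover have "Topological_Spaces.complete (UNIV::'h set)"
    by (meson Cauchy_convergent UNIV_I complete_def convergent_def)
  ultimately obtain \<psi> where "(\<Delta> \<longlongrightarrow> \<psi>) (at 0)"
    using complete_uniform[where S=UNIV] by (force simp add: filterlim_def)
  then show ?thesis unfolding \<Delta>_def by blast
qed



definition Psi :: "('a::euclidean_space \<Rightarrow> 'h::real_inner) \<Rightarrow> 'a \<Rightarrow> 'a \<Rightarrow> 'h" where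
  "Psi \<phi> x e = (SOME \<psi>. ((\<lambda>t. (1/t) *\<^sub>R (\<phi> (x + t *\<^sub>R e) - \<phi> x)) \<longlongrightarrow> \<psi>) (at 0))"

lemma Psi_lim:
  fixes \<phi> :: "'a::euclidean_space \<Rightarrow> 'h::{real_inner,complete_space}"
  assumes ik: "\<And>x y. inner (\<phi> x) (\<phi> y) = k x y"
    and C2: "C2_fun (\<lambda>p. k (fst p) (snd p))" and e: "e \<in> Basis"
  shows "((\<lambda>t. (1/t) *\<^sub>R (\<phi> (x + t *\<^sub>R e) - \<phi> x)) \<longlongrightarrow> Psi \<phi> x e) (at 0)"
  unfolding Psi_def by (rule someI_ex, rule feature_deriv[OF ik C2 e])

lemma Psi_dd:
  fixes \<phi> :: "'a::euclidean_space \<Rightarrow> 'h::{real_inner,complete_space}"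
  assumes ik: "\<And>x y. inner (\<phi> x) (\<phi> y) = k x y"
    and C2: "C2_fun (\<lambda>p. k (fst p) (snd p))" and e: "e \<in> Basis"
  shows "dir_deriv (\<lambda>u. inner f (\<phi> u)) e x = inner f (Psi \<phi> x e)"
proof -
  have "((\<lambda>h. inner f ((1/h) *\<^sub>R (\<phi> (x + h *\<^sub>R e) - \<phi> x))) \<longlongrightarrow> inner f (Psi \<phi> x e)) (at 0)"
    by (intro tendsto_inner tendsto_const Psi_lim[OF ik C2 e])
  moreover have "(\<lambda>h. inner f ((1/h) *\<^sub>R (\<phi> (x + h *\<^sub>R e) - \<phi> x))) =
      (\<lambda>h. (inner f (\<phi> (x + (0 + h) *\<^sub>R e)) - inner f (\<phi> (x + 0 *\<^sub>R e))) / h)"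
    by (rule ext) (simp add: inner_diff_right)
  ultimately have "DERIV (\<lambda>t. inner f (\<phi> (x + t *\<^sub>R e))) 0 :> inner f (Psi \<phi> x e)"
    unfolding DERIV_def by simp
  then show ?thesis unfolding dir_deriv_def by (rule DERIV_imp_deriv)
qed

lemma Psi_dd':
  fixes \<phi> :: "'a::euclidean_space \<Rightarrow> 'h::{real_inner,complete_space}"
  assumes ik: "\<And>x y. inner (\<phi> x) (\<phi> y) = k x y"
    and C2: "C2_fun (\<lambda>p. k (fst p) (snd p))" and e: "e \<in> Basis"
  shows "dir_deriv (\<lambda>u. inner (\<phi> u) f) e x = inner (Psi \<phi> x e) f"
  using Psi_dd[OF ik C2 e, of f x] by (simp add: inner_commute)

lemma uniq_sol:
  fixes \<psi> :: "'p::finite \<Rightarrow> 'h::real_inner"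
  assumes c: "c \<ge> 0" and lam: "lam > 0"
    and eq: "c *\<^sub>R (\<Sum>p\<in>UNIV. inner f (\<psi> p) *\<^sub>R \<psi> p) + lam *\<^sub>R f = c *\<^sub>R (\<Sum>p\<in>UNIV. inner g (\<psi> p) *\<^sub>R \<psi> p) + lam *\<^sub>R g"
  shows "f = g"
proof -
  define d where "d = f - g"
  have "c *\<^sub>R (\<Sum>p\<in>UNIV. inner d (\<psi> p) *\<^sub>R \<psi> p) + lam *\<^sub>R d = 0"
    using eq unfolding d_def
    by (simp add: inner_diff_left scaleR_left_diff_distrib sum_subtractf scaleR_diff_right algebra_simps)
  then have "inner d (c *\<^sub>R (\<Sum>p\<in>UNIV. inner d (\<psi> p) *\<^sub>R \<psi> p) + lam *\<^sub>R d) = 0" by simp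
  then have "c * (\<Sum>p\<in>UNIV. (inner d (\<psi> p))^2) + lam * inner d d = 0"
    by (simp add: inner_add_right inner_sum_right power2_eq_square)
  moreover have "c * (\<Sum>p\<in>UNIV. (inner d (\<psi> p))^2) \<ge> 0" using c by (simp add: sum_nonneg)
  moreover have "inner d d \<ge> 0" by simp
  ultimately have "lam * inner d d = 0" using lam by (smt (verit) mult_nonneg_nonneg)
  then have "d = 0" using lam by simp
  then show ?thesis unfolding d_def by simp
qed

lemma sum_pairs: "(\<Sum>i\<in>UNIV. \<Sum>l\<in>UNIV. g i l) = (\<Sum>p\<in>(UNIV::('a::finite \<times> 'b::finite) set). g (fst p) (snd p))"
  by (simp add: sum.cartesian_product split_def)



theorem proposition2:
  fixes k :: "real^'d::finite \<Rightarrow> real^'d \<Rightarrow> real"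
    and \<phi> :: "real^'d \<Rightarrow> 'h::{real_inner,complete_space}"
    and X :: "'n::finite \<Rightarrow> real^'d"
    and \<pi> :: "(real^'d) measure"
    and lam :: real
  assumes sym: "\<And>x y. k x y = k y x"
    and C2: "C2_fun (\<lambda>p. k (fst p) (snd p))"
    and rkhs: "is_rkhs_feature k \<phi>"
    and prob: "prob_space \<pi>" and sets_pi: "sets \<pi> = sets borel"
    and mean_wd: "\<exists>m. mean_emb_wd \<phi> \<pi> m"
    and lam_pos: "lam > 0"
  shows "\<forall>z. rk_eval \<phi> (f_muhat_pi \<phi> X \<pi> lam) z =
      (\<Sum>i\<in>UNIV. k (X i) z) / (real CARD('n) * lam)
      - (\<integral>y. k y z \<partial>\<pi>) / lam
      - (\<chi> p. d1k (snd p) k (X (fst p)) z) \<bullet>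
          (matrix_inv ((\<chi> p q. d12k (snd p) (snd q) k (X (fst p)) (X (fst q))) + (real CARD('n) * lam) *\<^sub>R mat 1)
           *v ((1 / (real CARD('n) * lam)) *\<^sub>R ((\<chi> p j. d1k (snd p) k (X (fst p)) (X j)) *v (\<chi> j. 1))
               - (1 / lam) *\<^sub>R (\<chi> p. \<integral>y. d1k (snd p) k (X (fst p)) y \<partial>\<pi>)))"
proof -
  have ik: "\<And>x y. inner (\<phi> x) (\<phi> y) = k x y" using rkhs unfolding is_rkhs_feature_def by blast
  have kfun: "k = (\<lambda>u v. inner (\<phi> u) (\<phi> v))" using ik by (intro ext) simp
  define N where "N = real CARD('n)"
  have Npos: "N > 0" unfolding N_def by simp
  define \<psi> :: "'n \<times> 'd \<Rightarrow> 'h" where "\<psi> p = Psi \<phi> (X (fst p)) (axis (snd p) 1)" for p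
  have ax: "axis l 1 \<in> (Basis :: (real^'d) set)" for l by simp
  have grad: "rk_grad \<phi> f x l = inner f (Psi \<phi> x (axis l 1))" for f x l
    unfolding rk_grad_def rk_eval_def by (rule Psi_dd[OF ik C2 ax])
  have d1: "d1k l k x z = inner (Psi \<phi> x (axis l 1)) (\<phi> z)" for l x z
    unfolding d1k_def kfun by (rule Psi_dd'[OF ik C2 ax])
  have d12: "d12k l m k x y = inner (Psi \<phi> x (axis l 1)) (Psi \<phi> y (axis m 1))" for l m x y
  proof -
    have "d12k l m k x y = dir_deriv (\<lambda>u. inner (\<phi> u) (Psi \<phi> y (axis m 1))) (axis l 1) x"
      unfolding d12k_def kfun Psi_dd[OF ik C2 ax] ..
    also have "\<dots> = inner (Psi \<phi> x (axis l 1)) (Psi \<phi> y (axis m 1))" by (rule Psi_dd'[OF ik C2 ax])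
    finally show ?thesis .
  qed
  have S: "S_op \<phi> X g = (1/N) *\<^sub>R (\<Sum>p\<in>UNIV. inner g (\<psi> p) *\<^sub>R \<psi> p)" for g
    unfolding S_op_def
  proof (rule the_equality)
    show "\<forall>f. inner f ((1/N) *\<^sub>R (\<Sum>p\<in>UNIV. inner g (\<psi> p) *\<^sub>R \<psi> p)) =
        1 / real CARD('n) * (\<Sum>i\<in>UNIV. \<Sum>l\<in>UNIV. rk_grad \<phi> f (X i) l * rk_grad \<phi> g (X i) l)"
      unfolding grad sum_pairs N_def \<psi>_def by (simp add: inner_sum_right mult.commute)
  next
    fix h assume h: "\<forall>f. inner f h =
        1 / real CARD('n) * (\<Sum>i\<in>UNIV. \<Sum>l\<in>UNIV. rk_grad \<phi> f (X i) l * rk_grad \<phi> g (X i) l)"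
    have "inner f h = inner f ((1/N) *\<^sub>R (\<Sum>p\<in>UNIV. inner g (\<psi> p) *\<^sub>R \<psi> p))" for f
      using h[rule_format, of f] unfolding grad sum_pairs N_def \<psi>_def by (simp add: inner_sum_right mult.commute)
    from this[of "h - (1/N) *\<^sub>R (\<Sum>p\<in>UNIV. inner g (\<psi> p) *\<^sub>R \<psi> p)"]
    have "inner (h - (1/N) *\<^sub>R (\<Sum>p\<in>UNIV. inner g (\<psi> p) *\<^sub>R \<psi> p)) (h - (1/N) *\<^sub>R (\<Sum>p\<in>UNIV. inner g (\<psi> p) *\<^sub>R \<psi> p)) = 0"
      by (simp only: inner_diff_right)
    then show "h = (1/N) *\<^sub>R (\<Sum>p\<in>UNIV. inner g (\<psi> p) *\<^sub>R \<psi> p)" by simp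
  qed
  obtain m where m: "mean_emb_wd \<phi> \<pi> m" using mean_wd by blast
  have mint: "inner f m = (\<integral>y. inner f (\<phi> y) \<partial>\<pi>)" for f using m unfolding mean_emb_wd_def by blast
  have memb: "mean_emb \<phi> \<pi> = m" unfolding mean_emb_def
  proof (rule the_equality)
    show "mean_emb_wd \<phi> \<pi> m" by (rule m)
  next
    fix m' assume m': "mean_emb_wd \<phi> \<pi> m'"
    have "inner f m' = inner f m" for f using m m' unfolding mean_emb_wd_def by simp
    from this[of "m' - m"] have "inner (m' - m) (m' - m) = 0" by (simp only: inner_diff_right)
    then show "m' = m" by simp
  qed
  define b where "b = emp_mean_emb \<phi> X - mean_emb \<phi> \<pi>"
  define H :: "real^('n\<times>'d)^('n\<times>'d)" where "H = (\<chi> p q. inner (\<psi> p) (\<psi> q))"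
  define M where "M = H + (N * lam) *\<^sub>R mat 1"
  have Meq: "(\<chi> p q. d12k (snd p) (snd q) k (X (fst p)) (X (fst q))) + (real CARD('n) * lam) *\<^sub>R mat 1 = M"
    unfolding M_def H_def N_def \<psi>_def d12 ..
  define w where "w = (1 / (N * lam)) *\<^sub>R ((\<chi> p j. d1k (snd p) k (X (fst p)) (X j)) *v (\<chi> j. 1))
               - (1 / lam) *\<^sub>R (\<chi> p. \<integral>y. d1k (snd p) k (X (fst p)) y \<partial>\<pi>)"
  have d1p: "d1k (snd p) k (X (fst p)) y = inner (\<psi> p) (\<phi> y)" for p y
    unfolding d1 \<psi>_def ..
  have d1p': "d1k (snd p) k (X (fst p)) = (\<lambda>y. inner (\<psi> p) (\<phi> y))" for p
    using d1p by (intro ext) simp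
  have wp: "w $ p = inner b (\<psi> p) / lam" for p
  proof -
    have "w $ p = (1 / (N * lam)) * (\<Sum>j\<in>UNIV. inner (\<psi> p) (\<phi> (X j))) - (1/lam) * (\<integral>y. inner (\<psi> p) (\<phi> y) \<partial>\<pi>)"
      unfolding w_def by (simp add: matrix_vector_mult_def d1p d1p')
    also have "\<dots> = inner b (\<psi> p) / lam"
      unfolding b_def emp_mean_emb_def memb inner_diff_left inner_scaleR_left inner_sum_left
      using Npos lam_pos by (simp add: inner_commute[of m] mint inner_commute[of "\<phi> _"] N_def field_simps)
    finally show ?thesis .
  qed
  have Minv: "invertible M"
  proof -
    have "x = 0" if Mx: "M *v x = 0" for x
    proof -
      define v where "v = (\<Sum>p\<in>UNIV. x$p *\<^sub>R \<psi> p)"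
      have Mv: "M *v x = H *v x + (N*lam) *\<^sub>R x"
        unfolding M_def by (simp add: matrix_vector_mult_add_rdistrib scaleR_matrix_vector_assoc[symmetric])
      have Hv: "x \<bullet> (H *v x) = inner v v"
        unfolding H_def v_def
        by (simp add: matrix_vector_mult_def inner_vec_def inner_sum_left inner_sum_right sum_distrib_left mult_ac)
           (subst sum.swap, simp add: mult_ac)
      have "x \<bullet> (M *v x) = inner v v + (N * lam) * (x \<bullet> x)"
        unfolding Mv inner_add_right Hv by simp
      then have "inner v v + (N * lam) * (x \<bullet> x) = 0" using Mx by simp
      moreover have "inner v v \<ge> 0" by simp
      moreover have "(N * lam) * (x \<bullet> x) \<ge> 0" using Npos lam_pos by simp
      ultimately have "(N * lam) * (x \<bullet> x) = 0" by linarith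
      then show "x = 0" using Npos lam_pos by simp
    qed
    then show ?thesis
      unfolding invertible_left_inverse matrix_left_invertible_ker by blast
  qed
  have Mi: "M ** matrix_inv M = mat 1"
    using Minv unfolding invertible_def matrix_inv_def by (rule someI_ex[THEN conjunct1])
  define c where "c = (N * lam) *\<^sub>R (matrix_inv M *v w)"
  have Mc: "M *v c = (N * lam) *\<^sub>R w"
    unfolding c_def matrix_vector_mult_scaleR matrix_vector_mul_assoc Mi by simp
  have Hc: "(H *v c) $ q = (N * lam) * w $ q - (N * lam) * c $ q" for q
  proof -
    have "(M *v c) $ q = (H *v c) $ q + (N * lam) * c $ q"
      unfolding M_def by (simp add: matrix_vector_mult_add_rdistrib scaleR_matrix_vector_assoc[symmetric])
    then show ?thesis using Mc by (simp add: vec_eq_iff)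
  qed
  define f0 where "f0 = (1/lam) *\<^sub>R b - (1/(N*lam)) *\<^sub>R (\<Sum>p\<in>UNIV. c$p *\<^sub>R \<psi> p)"
  have f0c: "inner f0 (\<psi> q) = c$q" for q
  proof -
    have Hcq: "(H *v c) $ q = (\<Sum>p\<in>UNIV. c$p * inner (\<psi> p) (\<psi> q))"
      unfolding H_def matrix_vector_mult_def
      by (simp, intro sum.cong refl, metis inner_commute mult.commute)
    have "inner f0 (\<psi> q) = inner b (\<psi> q) / lam - (1/(N*lam)) * (H *v c) $ q"
      unfolding f0_def Hcq
      unfolding inner_diff_left inner_scaleR_left inner_sum_left by simp
    also have "\<dots> = c$q" unfolding Hc wp[symmetric] using Npos lam_pos by (simp add: field_simps)
    finally show ?thesis .
  qed
  have f0eq: "S_op \<phi> X f0 + lam *\<^sub>R f0 = b"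
    unfolding S f0c unfolding f0_def using lam_pos
    by (simp add: scaleR_diff_right scaleR_sum_right)
  have fmu: "f_muhat_pi \<phi> X \<pi> lam = f0"
    unfolding f_muhat_pi_def b_def[symmetric]
  proof (rule the_equality)
    show "S_op \<phi> X f0 + lam *\<^sub>R f0 = b" by (rule f0eq)
  next
    fix f assume "S_op \<phi> X f + lam *\<^sub>R f = b"
    then have eqn: "S_op \<phi> X f + lam *\<^sub>R f = S_op \<phi> X f0 + lam *\<^sub>R f0" using f0eq by simp
    have N0: "0 \<le> 1/N" using Npos by simp
    show "f = f0" using eqn unfolding S by (rule uniq_sol[OF N0 lam_pos])
  qed
  show ?thesis
  proof
    fix z
    have kz: "(\<lambda>y. k z y) = (\<lambda>y. k y z)" by (intro ext) (rule sym)
    have bz: "inner b (\<phi> z) = (\<Sum>i\<in>UNIV. k (X i) z) / N - (\<integral>y. k y z \<partial>\<pi>)"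
      unfolding b_def emp_mean_emb_def memb inner_diff_left inner_scaleR_left inner_sum_left
      by (simp add: inner_commute[of m] mint ik N_def kz)
    have "rk_eval \<phi> (f_muhat_pi \<phi> X \<pi> lam) z = inner b (\<phi> z) / lam - (1/(N*lam)) * (\<Sum>p\<in>UNIV. c$p * inner (\<psi> p) (\<phi> z))"
      unfolding fmu rk_eval_def f0_def by (simp add: inner_diff_left inner_sum_left)
    also have "(1/(N*lam)) * (\<Sum>p\<in>UNIV. c$p * inner (\<psi> p) (\<phi> z)) = (\<chi> p. d1k (snd p) k (X (fst p)) z) \<bullet> (matrix_inv M *v w)"
      unfolding c_def using Npos lam_pos by (simp add: inner_vec_def d1p sum_distrib_left mult_ac)
    finally show "rk_eval \<phi> (f_muhat_pi \<phi> X \<pi> lam) z =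
      (\<Sum>i\<in>UNIV. k (X i) z) / (real CARD('n) * lam)
      - (\<integral>y. k y z \<partial>\<pi>) / lam
      - (\<chi> p. d1k (snd p) k (X (fst p)) z) \<bullet>
          (matrix_inv ((\<chi> p q. d12k (snd p) (snd q) k (X (fst p)) (X (fst q))) + (real CARD('n) * lam) *\<^sub>R mat 1)
           *v ((1 / (real CARD('n) * lam)) *\<^sub>R ((\<chi> p j. d1k (snd p) k (X (fst p)) (X j)) *v (\<chi> j. 1))
               - (1 / lam) *\<^sub>R (\<chi> p. \<integral>y. d1k (snd p) k (X (fst p)) y \<partial>\<pi>)))"
      unfolding Meq unfolding N_def[symmetric] unfolding w_def[symmetric] bz using lam_pos by (simp add: field_simps)
  qed
qed

end
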